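(* Let $\mathbf P=(P,\leq,{}',0,1)$ be a bounded poset which is the horizontal sum of Boolean posets $\mathbf P_{\alpha}=(P_{\alpha},\leq_{\alpha},{}'_{\alpha},0,1)$, $\alpha\in\Lambda$, and put $M(x,y)=L(U(x,y'),y)$ and $R(x,y)=L(U(L(x,y),x'))$. Then the Dedekind-MacNeille completion $\mathrm{DM}(\mathbf P)$ is a complete orthomodular lattice. Moreover, $\mathrm{DM}(\mathbf P)$ is a left residuated lattice with respect to the operations $x\odot y=(x\vee y')\wedge y$ and $x\to y=(x\wedge y)\vee x'$ obtained from $M$ and $R$ by the DM-transformation.
   Context: For $M\subseteq P$, $U(M)$ and $L(M)$ are the sets of upper and lower bounds of $M$; $U(a,b)=U(\{a,b\})$, $L(a,b)=L(\{a,b\})$. A poset with complementation is a bounded poset with antitone involution $'$ ($x\le y\Rightarrow y'\le x'$, $x''=x$) with $L(x,x')=\{0\}$, $U(x,x')=\{1\}$. A Boolean poset is a bounded poset with complementation $'$ that is distributive, i.e. $L(U(x,y),z)=L(U(L(x,z),L(y,z)))$ for all $x,y,z$. The horizontal sum of bounded posets is their disjoint union with bottoms identified to $0$ and tops identified to $1$. The Dedekind-MacNeille completion $\mathrm{DM}(\mathbf P)$ is the complete lattice of subsets $B\subseteq P$ with $L(U(B))=B$ ordered by inclusion, $P$ embedded via $x\mapsto L(\{x\})$, with antitone involution $X'=L(\{u'\mid u\in X\})$. The DM-transformation replaces $U(x,y)$ or $LU(x,y)$ by $x\vee y$ and $L(x,y)$ by $x\wedge y$. A lattice with complementation is orthomodular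 if $x\vee y=((x\vee y)\wedge y')\vee y$. A lattice with top $1$ is left residuated with respect to binary operations $\odot,\to$ if $x\odot 1=x=1\odot x$ and $x\odot y\le z \iff x\le y\to z$ for all $x,y,z$ ($\odot$ need not be associative or commutative). *)

theory Defs
  imports Main
begin

definition ubs :: "'a set \<Rightarrow> ('a \<Rightarrow> 'a \<Rightarrow> bool) \<Rightarrow> 'a set \<Rightarrow> 'a set" where
  "ubs P le M = {x \<in> P. \<forall>m\<in>M. le m x}"

definition lbs :: "'a set \<Rightarrow> ('a \<Rightarrow> 'a \<Rightarrow> bool) \<Rightarrow> 'a set \<Rightarrow> 'a set" where
  "lbs P le M = {x \<in> P. \<forall>m\<in>M. le x m}"

definition poset_on :: "'a set \<Rightarrow> ('a \<Rightarrow> 'a \<Rightarrow> bool) \<Rightarrow> bool" where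
  "poset_on P le \<longleftrightarrow>
     (\<forall>x\<in>P. le x x) \<and>
     (\<forall>x\<in>P. \<forall>y\<in>P. le x y \<and> le y x \<longrightarrow> x = y) \<and>
     (\<forall>x\<in>P. \<forall>y\<in>P. \<forall>z\<in>P. le x y \<and> le y z \<longrightarrow> le x z)"

definition bounded_poset :: "'a set \<Rightarrow> ('a \<Rightarrow> 'a \<Rightarrow> bool) \<Rightarrow> 'a \<Rightarrow> 'a \<Rightarrow> bool" where
  "bounded_poset P le zero one \<longleftrightarrow> poset_on P le \<and> zero \<in> P \<and> one \<in> P \<and>
     (\<forall>x\<in>P. le zero x \<and> le x one)"

definition poset_with_complementation ::
  "'a set \<Rightarrow> ('a \<Rightarrow> 'a \<Rightarrow> bool) \<Rightarrow> ('a \<Rightarrow> 'a) \<Rightarrow> 'a \<Rightarrow> 'a \<Rightarrow> bool" where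
  "poset_with_complementation P le c zero one \<longleftrightarrow> bounded_poset P le zero one \<and>
     (\<forall>x\<in>P. c x \<in> P) \<and>
     (\<forall>x\<in>P. \<forall>y\<in>P. le x y \<longrightarrow> le (c y) (c x)) \<and>
     (\<forall>x\<in>P. c (c x) = x) \<and>
     (\<forall>x\<in>P. lbs P le {x, c x} = {zero} \<and> ubs P le {x, c x} = {one})"

definition distributive_poset :: "'a set \<Rightarrow> ('a \<Rightarrow> 'a \<Rightarrow> bool) \<Rightarrow> bool" where
  "distributive_poset P le \<longleftrightarrow>
     (\<forall>x\<in>P. \<forall>y\<in>P. \<forall>z\<in>P.
        lbs P le (ubs P le {x, y} \<union> {z}) =
        lbs P le (ubs P le (lbs P le {x, z} \<union> lbs P le {y, z})))"

definition boolean_poset ::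
  "'a set \<Rightarrow> ('a \<Rightarrow> 'a \<Rightarrow> bool) \<Rightarrow> ('a \<Rightarrow> 'a) \<Rightarrow> 'a \<Rightarrow> 'a \<Rightarrow> bool" where
  "boolean_poset P le c zero one \<longleftrightarrow>
     poset_with_complementation P le c zero one \<and> distributive_poset P le"

definition horizontal_sum ::
  "'a set \<Rightarrow> ('a \<Rightarrow> 'a \<Rightarrow> bool) \<Rightarrow> ('a \<Rightarrow> 'a) \<Rightarrow> 'a \<Rightarrow> 'a \<Rightarrow> 'i set \<Rightarrow> ('i \<Rightarrow> 'a set) \<Rightarrow> bool" where
  "horizontal_sum P le c zero one Lam Q \<longleftrightarrow>
     P = (\<Union>a\<in>Lam. Q a) \<and>
     (\<forall>a\<in>Lam. boolean_poset (Q a) le c zero one) \<and>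
     (\<forall>a\<in>Lam. \<forall>b\<in>Lam. a \<noteq> b \<longrightarrow> Q a \<inter> Q b = {zero, one}) \<and>
     (\<forall>x\<in>P. \<forall>y\<in>P. le x y \<longleftrightarrow> (\<exists>a\<in>Lam. x \<in> Q a \<and> y \<in> Q a \<and> le x y))"

definition dm :: "'a set \<Rightarrow> ('a \<Rightarrow> 'a \<Rightarrow> bool) \<Rightarrow> 'a set set" where
  "dm P le = {B. B \<subseteq> P \<and> lbs P le (ubs P le B) = B}"

definition dm_compl :: "'a set \<Rightarrow> ('a \<Rightarrow> 'a \<Rightarrow> bool) \<Rightarrow> ('a \<Rightarrow> 'a) \<Rightarrow> 'a set \<Rightarrow> 'a set" where
  "dm_compl P le c X = lbs P le (c ` X)"

definition dm_embed :: "'a set \<Rightarrow> ('a \<Rightarrow> 'a \<Rightarrow> bool) \<Rightarrow> 'a \<Rightarrow> 'a set" where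
  "dm_embed P le x = lbs P le {x}"

definition is_lub :: "'b set \<Rightarrow> ('b \<Rightarrow> 'b \<Rightarrow> bool) \<Rightarrow> 'b set \<Rightarrow> 'b \<Rightarrow> bool" where
  "is_lub D le S x \<longleftrightarrow> x \<in> D \<and> (\<forall>s\<in>S. le s x) \<and> (\<forall>y\<in>D. (\<forall>s\<in>S. le s y) \<longrightarrow> le x y)"

definition is_glb :: "'b set \<Rightarrow> ('b \<Rightarrow> 'b \<Rightarrow> bool) \<Rightarrow> 'b set \<Rightarrow> 'b \<Rightarrow> bool" where
  "is_glb D le S x \<longleftrightarrow> x \<in> D \<and> (\<forall>s\<in>S. le x s) \<and> (\<forall>y\<in>D. (\<forall>s\<in>S. le y s) \<longrightarrow> le y x)"

definition lattice_on :: "'b set \<Rightarrow> ('b \<Rightarrow> 'b \<Rightarrow> bool) \<Rightarrow> bool" where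
  "lattice_on D le \<longleftrightarrow> poset_on D le \<and>
     (\<forall>x\<in>D. \<forall>y\<in>D. (\<exists>z. is_lub D le {x, y} z) \<and> (\<exists>z. is_glb D le {x, y} z))"

definition complete_lattice_on :: "'b set \<Rightarrow> ('b \<Rightarrow> 'b \<Rightarrow> bool) \<Rightarrow> bool" where
  "complete_lattice_on D le \<longleftrightarrow> poset_on D le \<and>
     (\<forall>S. S \<subseteq> D \<longrightarrow> (\<exists>z. is_lub D le S z) \<and> (\<exists>z. is_glb D le S z))"

definition join_on :: "'b set \<Rightarrow> ('b \<Rightarrow> 'b \<Rightarrow> bool) \<Rightarrow> 'b \<Rightarrow> 'b \<Rightarrow> 'b" where
  "join_on D le x y = (THE z. is_lub D le {x, y} z)"

definition meet_on :: "'b set \<Rightarrow> ('b \<Rightarrow> 'b \<Rightarrow> bool) \<Rightarrow> 'b \<Rightarrow> 'b \<Rightarrow> 'b" where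
  "meet_on D le x y = (THE z. is_glb D le {x, y} z)"

definition lattice_with_complementation ::
  "'b set \<Rightarrow> ('b \<Rightarrow> 'b \<Rightarrow> bool) \<Rightarrow> ('b \<Rightarrow> 'b) \<Rightarrow> 'b \<Rightarrow> 'b \<Rightarrow> bool" where
  "lattice_with_complementation D le c zero one \<longleftrightarrow>
     lattice_on D le \<and> bounded_poset D le zero one \<and>
     (\<forall>x\<in>D. c x \<in> D) \<and>
     (\<forall>x\<in>D. \<forall>y\<in>D. le x y \<longrightarrow> le (c y) (c x)) \<and>
     (\<forall>x\<in>D. c (c x) = x) \<and>
     (\<forall>x\<in>D. meet_on D le x (c x) = zero \<and> join_on D le x (c x) = one)"

definition orthomodular_lattice ::
  "'b set \<Rightarrow> ('b \<Rightarrow> 'b \<Rightarrow> bool) \<Rightarrow> ('b \<Rightarrow> 'b) \<Rightarrow> 'b \<Rightarrow> 'b \<Rightarrow> bool" where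
  "orthomodular_lattice D le c zero one \<longleftrightarrow>
     lattice_with_complementation D le c zero one \<and>
     (\<forall>x\<in>D. \<forall>y\<in>D. join_on D le x y =
        join_on D le (meet_on D le (join_on D le x y) (c y)) y)"

definition left_residuated ::
  "'b set \<Rightarrow> ('b \<Rightarrow> 'b \<Rightarrow> bool) \<Rightarrow> 'b \<Rightarrow> ('b \<Rightarrow> 'b \<Rightarrow> 'b) \<Rightarrow> ('b \<Rightarrow> 'b \<Rightarrow> 'b) \<Rightarrow> bool" where
  "left_residuated D le one mult imp \<longleftrightarrow>
     lattice_on D le \<and> one \<in> D \<and> (\<forall>x\<in>D. le x one) \<and>
     (\<forall>x\<in>D. \<forall>y\<in>D. mult x y \<in> D \<and> imp x y \<in> D) \<and>
     (\<forall>x\<in>D. mult x one = x \<and> mult one x = x) \<and>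
     (\<forall>x\<in>D. \<forall>y\<in>D. \<forall>z\<in>D. le (mult x y) z \<longleftrightarrow> le x (imp y z))"

end

theory Submission
  imports Defs
begin

locale hs =
  fixes P :: "'a set" and le :: "'a \<Rightarrow> 'a \<Rightarrow> bool" and c :: "'a \<Rightarrow> 'a"
    and zero one :: 'a and Lam :: "'i set" and Q :: "'i \<Rightarrow> 'a set"
  assumes bp: "bounded_poset P le zero one"
    and hsum: "horizontal_sum P le c zero one Lam Q"
begin

abbreviation L where "L \<equiv> lbs P le"
abbreviation U where "U \<equiv> ubs P le"
abbreviation D where "D \<equiv> dm P le"
abbreviation cm where "cm \<equiv> dm_compl P le c"
abbreviation jn where "jn X Y \<equiv> L (U (X \<union> Y))"

lemma prefl: "x \<in> P \<Longrightarrow> le x x"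
  using bp unfolding bounded_poset_def poset_on_def by blast
lemma pantisym: "x \<in> P \<Longrightarrow> y \<in> P \<Longrightarrow> le x y \<Longrightarrow> le y x \<Longrightarrow> x = y"
  using bp unfolding bounded_poset_def poset_on_def by blast
lemma ptrans: "x \<in> P \<Longrightarrow> y \<in> P \<Longrightarrow> z \<in> P \<Longrightarrow> le x y \<Longrightarrow> le y z \<Longrightarrow> le x z"
  using bp unfolding bounded_poset_def poset_on_def by blast
lemma zero: "zero \<in> P" and one: "one \<in> P"
  using bp unfolding bounded_poset_def by auto
lemma zero_le: "x \<in> P \<Longrightarrow> le zero x" and le_one: "x \<in> P \<Longrightarrow> le x one"
  using bp unfolding bounded_poset_def by auto

lemma hsp: "P = (\<Union>a\<in>Lam. Q a)" "\<forall>a\<in>Lam. boolean_poset (Q a) le c zero one"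
   "\<forall>a\<in>Lam. \<forall>b\<in>Lam. a \<noteq> b \<longrightarrow> Q a \<inter> Q b = {zero, one}"
   "\<forall>x\<in>P. \<forall>y\<in>P. le x y \<longleftrightarrow> (\<exists>a\<in>Lam. x \<in> Q a \<and> y \<in> Q a \<and> le x y)"
  using hsum unfolding horizontal_sum_def by simp_all
lemma P_eq: "P = (\<Union>a\<in>Lam. Q a)" by (rule hsp(1))
lemma Qb: "a \<in> Lam \<Longrightarrow> boolean_poset (Q a) le c zero one"
  using hsp(2) by simp
lemma Qdisj: "a \<in> Lam \<Longrightarrow> b \<in> Lam \<Longrightarrow> a \<noteq> b \<Longrightarrow> Q a \<inter> Q b = {zero, one}"
  using hsp(3) by simp
lemma le_comp: "x \<in> P \<Longrightarrow> y \<in> P \<Longrightarrow> le x y \<Longrightarrow> \<exists>a\<in>Lam. x \<in> Q a \<and> y \<in> Q a"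
  using hsp(4) by meson
lemma QP: "a \<in> Lam \<Longrightarrow> Q a \<subseteq> P" using P_eq by blast

lemma Qparts: "a \<in> Lam \<Longrightarrow> (\<forall>x\<in>Q a. c x \<in> Q a) \<and>
     (\<forall>x\<in>Q a. \<forall>y\<in>Q a. le x y \<longrightarrow> le (c y) (c x)) \<and>
     (\<forall>x\<in>Q a. c (c x) = x) \<and>
     (\<forall>x\<in>Q a. lbs (Q a) le {x, c x} = {zero} \<and> ubs (Q a) le {x, c x} = {one}) \<and>
     distributive_poset (Q a) le"
  using Qb unfolding boolean_poset_def poset_with_complementation_def by simp
lemma Qc: "a \<in> Lam \<Longrightarrow> x \<in> Q a \<Longrightarrow> c x \<in> Q a"
  using Qparts by simp
lemma Qanti: "a \<in> Lam \<Longrightarrow> x \<in> Q a \<Longrightarrow> y \<in> Q a \<Longrightarrow> le x y \<Longrightarrow> le (c y) (c x)"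
  using Qparts by simp
lemma Qinv: "a \<in> Lam \<Longrightarrow> x \<in> Q a \<Longrightarrow> c (c x) = x"
  using Qparts by simp
lemma Qlc: "a \<in> Lam \<Longrightarrow> x \<in> Q a \<Longrightarrow> lbs (Q a) le {x, c x} = {zero}"
  using Qparts by simp
lemma Quc: "a \<in> Lam \<Longrightarrow> x \<in> Q a \<Longrightarrow> ubs (Q a) le {x, c x} = {one}"
  using Qparts by simp
lemma Qdist: "a \<in> Lam \<Longrightarrow> x \<in> Q a \<Longrightarrow> y \<in> Q a \<Longrightarrow> z \<in> Q a \<Longrightarrow>
   lbs (Q a) le (ubs (Q a) le {x, y} \<union> {z}) =
        lbs (Q a) le (ubs (Q a) le (lbs (Q a) le {x, z} \<union> lbs (Q a) le {y, z}))"
  using Qparts unfolding distributive_poset_def by simp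

lemma inQ: "x \<in> P \<Longrightarrow> \<exists>a\<in>Lam. x \<in> Q a"
proof -
  assume "x \<in> P" then have "x \<in> (\<Union>a\<in>Lam. Q a)" using P_eq by simp
  then show ?thesis by (rule UN_E) blast
qed

lemma Lam_ne: "Lam \<noteq> {}" using inQ[OF zero] by blast

lemma Q01: "a \<in> Lam \<Longrightarrow> zero \<in> Q a \<and> one \<in> Q a"
proof -
  assume a: "a \<in> Lam"
  show ?thesis
  proof (cases "\<exists>b\<in>Lam. b \<noteq> a")
    case True then obtain b where "b \<in> Lam" "b \<noteq> a" by blast
    then have "Q b \<inter> Q a = {zero, one}" using Qdisj[OF \<open>b\<in>Lam\<close> a] by simp
    then show ?thesis by (metis Int_iff insertI1 insertI2)
  next
    case False then have "Lam = {a}" using a by blast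
    then have "P = Q a" using P_eq by simp
    then show ?thesis using zero one by auto
  qed
qed

lemma cP: "x \<in> P \<Longrightarrow> c x \<in> P" using inQ Qc QP by blast
lemma cc: "x \<in> P \<Longrightarrow> c (c x) = x" using inQ Qinv by blast
lemma anti: "x \<in> P \<Longrightarrow> y \<in> P \<Longrightarrow> le x y \<Longrightarrow> le (c y) (c x)"
proof -
  assume "x \<in> P" "y \<in> P" "le x y"
  then obtain a where "a \<in> Lam" "x \<in> Q a" "y \<in> Q a" using le_comp by blast
  then show ?thesis using Qanti \<open>le x y\<close> by blast
qed
lemma anti_iff: "x \<in> P \<Longrightarrow> y \<in> P \<Longrightarrow> le (c y) (c x) \<longleftrightarrow> le x y"
  proof
  assume "x \<in> P" "y \<in> P" "le (c y) (c x)"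
  then show "le x y" using anti[of "c y" "c x"] cc cP by metis
qed (rule anti)

lemma c0: "c zero = one"
proof -
  obtain a where a: "a \<in> Lam" using Lam_ne by blast
  have z: "zero \<in> Q a" using Q01 a by blast
  have "c zero \<in> Q a" using Qc a z by blast
  moreover have "le zero (c zero)" using zero_le cP zero by blast
  moreover have "le (c zero) (c zero)" using prefl cP zero by blast
  ultimately have "c zero \<in> ubs (Q a) le {zero, c zero}" unfolding ubs_def by auto
  then show ?thesis using Quc[OF a z] by blast
qed
lemma c1: "c one = zero" using c0 cc zero by metis

lemma Lmem: "x \<in> L A \<longleftrightarrow> x \<in> P \<and> (\<forall>m\<in>A. le x m)" unfolding lbs_def by simp
lemma Umem: "x \<in> U A \<longleftrightarrow> x \<in> P \<and> (\<forall>m\<in>A. le m x)" unfolding ubs_def by simp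
lemma L_sub: "L A \<subseteq> P" using Lmem by blast
lemma U_sub: "U A \<subseteq> P" using Umem by blast
lemma L_anti: "A \<subseteq> B \<Longrightarrow> L B \<subseteq> L A" unfolding lbs_def by blast
lemma U_anti: "A \<subseteq> B \<Longrightarrow> U B \<subseteq> U A" unfolding ubs_def by blast
lemma ext_LU: "A \<subseteq> P \<Longrightarrow> A \<subseteq> L (U A)" unfolding lbs_def ubs_def by blast
lemma ext_UL: "A \<subseteq> P \<Longrightarrow> A \<subseteq> U (L A)" unfolding lbs_def ubs_def by blast
lemma LUL: "A \<subseteq> P \<Longrightarrow> L (U (L A)) = L A"
  using L_anti[OF ext_UL] ext_LU[OF L_sub] by (metis equalityI)
lemma dm_iff: "X \<in> D \<longleftrightarrow> X \<subseteq> P \<and> L (U X) = X" unfolding dm_def by simp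
lemma L_in_D: "A \<subseteq> P \<Longrightarrow> L A \<in> D" using dm_iff LUL L_sub by simp
lemma D_sub: "X \<in> D \<Longrightarrow> X \<subseteq> P" using dm_iff by simp
lemma D_cl: "X \<in> D \<Longrightarrow> L (U X) = X" using dm_iff by simp
lemma cl_least: "X \<in> D \<Longrightarrow> A \<subseteq> X \<Longrightarrow> L (U A) \<subseteq> X"
  by (metis D_cl L_anti U_anti)
lemma zero_in: "X \<in> D \<Longrightarrow> zero \<in> X"
  by (metis D_cl Lmem Umem zero zero_le)
lemma down: "X \<in> D \<Longrightarrow> x \<in> X \<Longrightarrow> z \<in> P \<Longrightarrow> le z x \<Longrightarrow> z \<in> X"
proof -
  assume X: "X \<in> D" and x: "x \<in> X" and z: "z \<in> P" "le z x"
  have "z \<in> L (U X)" unfolding Lmem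
  proof (intro conjI ballI)
    fix m assume m: "m \<in> U X"
    then have "le x m" "m \<in> P" using Umem x by auto
    moreover have "x \<in> P" using x D_sub X by blast
    ultimately show "le z m" using ptrans z by blast
  qed (rule z(1))
  then show ?thesis using D_cl X by simp
qed
lemma P_in_D: "P \<in> D" using dm_iff ext_LU L_sub by blast
lemma emb1: "L {one} = P" using Lmem le_one by blast
lemma emb0: "L {zero} = {zero}"
proof -
  have "x = zero" if "x \<in> L {zero}" for x
    using that Lmem pantisym zero zero_le by auto
  moreover have "zero \<in> L {zero}" using Lmem zero prefl by simp
  ultimately show ?thesis by blast
qed

lemma c_L: "A \<subseteq> P \<Longrightarrow> c ` (L A) = U (c ` A)"
proof
  assume A: "A \<subseteq> P"
  show "c ` L A \<subseteq> U (c ` A)"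
  proof
    fix y assume "y \<in> c ` L A"
    then obtain x where x: "x \<in> L A" "y = c x" by blast
    have "x \<in> P" using x L_sub by blast
    show "y \<in> U (c ` A)" unfolding Umem
    proof (intro conjI ballI)
      show "y \<in> P" using x cP \<open>x \<in> P\<close> by simp
      fix m assume "m \<in> c ` A"
      then obtain a where a: "a \<in> A" "m = c a" by blast
      have "le x a" using x(1) a(1) unfolding Lmem by blast
      then show "le m y" using anti[of x a] \<open>x \<in> P\<close> A a x(2) by blast
    qed
  qed
  show "U (c ` A) \<subseteq> c ` L A"
  proof
    fix y assume y: "y \<in> U (c ` A)"
    then have yP: "y \<in> P" using U_sub by blast
    have "c y \<in> L A" unfolding Lmem
    proof (intro conjI ballI)
      show "c y \<in> P" using cP yP by blast
      fix m assume m: "m \<in> A"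
      then have "le (c m) y" using y Umem by blast
      then have "le (c y) (c (c m))" using anti cP m A yP by blast
      then show "le (c y) m" using cc m A by auto
    qed
    then show "y \<in> c ` L A" using cc[OF yP] by (metis image_eqI)
  qed
qed

lemma cimg: "A \<subseteq> P \<Longrightarrow> c ` A \<subseteq> P" using cP by blast
lemma ccimg: "A \<subseteq> P \<Longrightarrow> c ` c ` A = A"
proof -
  assume A: "A \<subseteq> P"
  show ?thesis
  proof (rule set_eqI)
    fix x show "x \<in> c ` c ` A \<longleftrightarrow> x \<in> A"
    proof
      assume "x \<in> c ` c ` A"
      then obtain a where "a \<in> A" "x = c (c a)" by blast
      then show "x \<in> A" using cc[of a] A by (metis subsetD)
    next
      assume x: "x \<in> A"
      then have "x = c (c x)" using cc[of x] A by (metis subsetD)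
      then show "x \<in> c ` c ` A" using x by (metis imageI)
    qed
  qed
qed

lemma cm_def': "cm X = L (c ` X)" unfolding dm_compl_def by simp
lemma cm_in: "X \<subseteq> P \<Longrightarrow> cm X \<in> D" unfolding cm_def' by (rule L_in_D, rule cimg)
lemma cm_anti: "X \<subseteq> Y \<Longrightarrow> cm Y \<subseteq> cm X" unfolding cm_def' by (rule L_anti) blast
lemma cm_inv: "X \<in> D \<Longrightarrow> cm (cm X) = X"
proof -
  assume X: "X \<in> D"
  have "cm (cm X) = L (c ` L (c ` X))" unfolding cm_def' ..
  also have "c ` L (c ` X) = U (c ` c ` X)" by (rule c_L, rule cimg, rule D_sub, rule X)
  also have "c ` c ` X = X" by (rule ccimg, rule D_sub, rule X)
  finally show ?thesis using D_cl X by simp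
qed

lemma meet_compl: "X \<in> D \<Longrightarrow> X \<inter> cm X = {zero}"
proof -
  assume X: "X \<in> D"
  have "z = zero" if z: "z \<in> X" "z \<in> cm X" for z
  proof -
    have zP: "z \<in> P" using z D_sub X by blast
    obtain a where a: "a \<in> Lam" "z \<in> Q a" using inQ zP by blast
    have "le z (c z)" using z(2) z(1) unfolding cm_def' Lmem by blast
    moreover have "le z z" using prefl zP by blast
    ultimately have "z \<in> lbs (Q a) le {z, c z}" unfolding lbs_def using a(2) by simp
    then have "z \<in> {zero}" by (simp only: Qlc[OF a])
    then show ?thesis by simp
  qed
  moreover have "zero \<in> X" "zero \<in> cm X" using zero_in X cm_in D_sub by auto
  ultimately show ?thesis by blast
qed

lemma join_compl: "X \<in> D \<Longrightarrow> jn X (cm X) = P"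
proof -
  assume X: "X \<in> D"
  have "U (X \<union> cm X) \<subseteq> {one}"
  proof
    fix u assume u: "u \<in> U (X \<union> cm X)"
    then have uP: "u \<in> P" using U_sub by blast
    have cuP: "c u \<in> P" using cP uP by blast
    have "c u \<in> cm X" unfolding cm_def' Lmem
    proof (intro conjI ballI)
      fix m assume "m \<in> c ` X"
      then obtain x where x: "x \<in> X" "m = c x" by blast
      then have "le x u" using u unfolding Umem by blast
      moreover have "x \<in> P" using x(1) D_sub[OF X] by blast
      ultimately show "le (c u) m" using anti[of x u] x(2) uP by simp
    qed (rule cuP)
    moreover have "c u \<in> cm (cm X)" unfolding cm_def'[of "cm X"] Lmem
    proof (intro conjI ballI)
      fix m assume "m \<in> c ` cm X"
      then obtain x where x: "x \<in> cm X" "m = c x" by blast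
      then have "le x u" using u unfolding Umem by blast
      moreover have "x \<in> P" using x L_sub unfolding cm_def' by blast
      ultimately show "le (c u) m" using anti[of x u] x(2) uP by simp
    qed (rule cuP)
    ultimately have "c u \<in> X \<inter> cm X" using cm_inv X by simp
    then have "c u \<in> {zero}" by (simp only: meet_compl[OF X])
    then have "c (c u) = one" using c0 by simp
    then have "u = one" using cc[OF uP] by simp
    then show "u \<in> {one}" by simp
  qed
  then have "L {one} \<subseteq> jn X (cm X)" by (rule L_anti)
  then have "P \<subseteq> jn X (cm X)" by (simp only: emb1)
  then show ?thesis using L_sub[of "U (X \<union> cm X)"] by (rule equalityI[rotated])
qed

lemma Un_sub: "X \<in> D \<Longrightarrow> Y \<in> D \<Longrightarrow> X \<union> Y \<subseteq> P" using D_sub by blast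
lemma jn_D: "X \<in> D \<Longrightarrow> Y \<in> D \<Longrightarrow> jn X Y \<in> D"
  by (rule L_in_D, rule U_sub)
lemma jn_ub1: "X \<in> D \<Longrightarrow> Y \<in> D \<Longrightarrow> X \<subseteq> jn X Y"
  using ext_LU[OF Un_sub] by blast
lemma jn_ub2: "X \<in> D \<Longrightarrow> Y \<in> D \<Longrightarrow> Y \<subseteq> jn X Y"
  using ext_LU[OF Un_sub] by blast
lemma jn_least: "Z \<in> D \<Longrightarrow> X \<subseteq> Z \<Longrightarrow> Y \<subseteq> Z \<Longrightarrow> jn X Y \<subseteq> Z"
  by (rule cl_least) auto
lemma jn_mono: "A \<subseteq> A' \<Longrightarrow> jn A B \<subseteq> jn A' B"
  by (rule L_anti, rule U_anti) blast

lemma L_Un: "L (A \<union> B) = L A \<inter> L B" unfolding lbs_def by blast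
lemma mt_D: "X \<in> D \<Longrightarrow> Y \<in> D \<Longrightarrow> X \<inter> Y \<in> D"
proof -
  assume X: "X \<in> D" and Y: "Y \<in> D"
  have "X \<inter> Y = L (U X \<union> U Y)" using D_cl[OF X] D_cl[OF Y] L_Un by simp
  moreover have "U X \<union> U Y \<subseteq> P" using U_sub by blast
  ultimately show ?thesis using L_in_D by simp
qed

lemma lub_unique: "is_lub DD (\<subseteq>) S x \<Longrightarrow> is_lub DD (\<subseteq>) S y \<Longrightarrow> x = y"
  unfolding is_lub_def by (meson subset_antisym)
lemma glb_unique: "is_glb DD (\<subseteq>) S x \<Longrightarrow> is_glb DD (\<subseteq>) S y \<Longrightarrow> x = y"
  unfolding is_glb_def by (meson subset_antisym)

lemma jn_lub: "X \<in> D \<Longrightarrow> Y \<in> D \<Longrightarrow> is_lub D (\<subseteq>) {X, Y} (jn X Y)"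
  unfolding is_lub_def
proof (intro conjI ballI impI)
  assume X: "X \<in> D" and Y: "Y \<in> D"
  show "jn X Y \<in> D" using jn_D X Y .
  fix s assume "s \<in> {X, Y}" then show "s \<subseteq> jn X Y" using jn_ub1[OF X Y] jn_ub2[OF X Y] by blast
next
  fix Z assume "Z \<in> D" "\<forall>s\<in>{X, Y}. s \<subseteq> Z"
  then show "jn X Y \<subseteq> Z" using jn_least by simp
qed
lemma mt_glb: "X \<in> D \<Longrightarrow> Y \<in> D \<Longrightarrow> is_glb D (\<subseteq>) {X, Y} (X \<inter> Y)"
  unfolding is_glb_def
proof (intro conjI ballI impI)
  assume X: "X \<in> D" and Y: "Y \<in> D"
  show "X \<inter> Y \<in> D" using mt_D X Y .
  fix s assume "s \<in> {X, Y}" then show "X \<inter> Y \<subseteq> s" by blast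
next
  fix Z assume "Z \<in> D" "\<forall>s\<in>{X, Y}. Z \<subseteq> s"
  then show "Z \<subseteq> X \<inter> Y" by simp
qed

lemma join_eq: "X \<in> D \<Longrightarrow> Y \<in> D \<Longrightarrow> join_on D (\<subseteq>) X Y = jn X Y"
  unfolding join_on_def by (rule the_equality, rule jn_lub, assumption+, rule lub_unique, assumption, rule jn_lub)
lemma meet_eq: "X \<in> D \<Longrightarrow> Y \<in> D \<Longrightarrow> meet_on D (\<subseteq>) X Y = X \<inter> Y"
  unfolding meet_on_def by (rule the_equality, rule mt_glb, assumption+, rule glb_unique, assumption, rule mt_glb)

lemma poset_D: "poset_on D (\<subseteq>)" unfolding poset_on_def by blast

lemma lattice_D: "lattice_on D (\<subseteq>)"
  unfolding lattice_on_def using poset_D jn_lub mt_glb by blast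

lemma complete_D: "complete_lattice_on D (\<subseteq>)"
  unfolding complete_lattice_on_def
proof (intro conjI allI impI)
  show "poset_on D (\<subseteq>)" by (rule poset_D)
  fix S assume S: "S \<subseteq> D"
  have SP: "\<Union>S \<subseteq> P" using S D_sub by blast
  have "is_lub D (\<subseteq>) S (L (U (\<Union>S)))" unfolding is_lub_def
  proof (intro conjI ballI allI impI)
    show "L (U (\<Union>S)) \<in> D" by (rule L_in_D, rule U_sub)
    fix X assume "X \<in> S" then show "X \<subseteq> L (U (\<Union>S))" using ext_LU[OF SP] by blast
  next
    fix Y assume "Y \<in> D" "\<forall>s\<in>S. s \<subseteq> Y"
    then show "L (U (\<Union>S)) \<subseteq> Y" using cl_least[of Y "\<Union>S"] by blast
  qed
  then show "\<exists>z. is_lub D (\<subseteq>) S z" by blast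
  have UP: "\<Union>(U ` S) \<subseteq> P" using U_sub by blast
  have "is_glb D (\<subseteq>) S (L (\<Union>(U ` S)))" unfolding is_glb_def
  proof (intro conjI ballI allI impI)
    show "L (\<Union>(U ` S)) \<in> D" by (rule L_in_D, rule UP)
    fix X assume X: "X \<in> S"
    have "L (\<Union>(U ` S)) \<subseteq> L (U X)" by (rule L_anti) (use X in blast)
    then show "L (\<Union>(U ` S)) \<subseteq> X" using D_cl X S by auto
  next
    fix Y assume Y: "Y \<in> D" "\<forall>s\<in>S. Y \<subseteq> s"
    show "Y \<subseteq> L (\<Union>(U ` S))"
    proof
      fix y assume y: "y \<in> Y"
      show "y \<in> L (\<Union>(U ` S))" unfolding Lmem
      proof (intro conjI ballI)
        show "y \<in> P" using y D_sub Y by blast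
        fix m assume "m \<in> \<Union>(U ` S)"
        then obtain X where X: "X \<in> S" "m \<in> U X" by blast
        have "y \<in> X" using Y X y by blast
        then show "le y m" using X(2) unfolding Umem by blast
      qed
    qed
  qed
  then show "\<exists>z. is_glb D (\<subseteq>) S z" by blast
qed

lemma zero_D: "{zero} \<in> D" using L_in_D[of "{zero}"] emb0 zero by simp
lemma cm_zero: "cm {zero} = P"
  unfolding cm_def' using c0 emb1 by simp
lemma cm_P: "cm P = {zero}"
  using meet_compl[OF P_in_D] L_sub unfolding cm_def' by blast

lemma uniq_comp: "a \<in> Lam \<Longrightarrow> b \<in> Lam \<Longrightarrow> x \<in> Q a \<Longrightarrow> x \<in> Q b \<Longrightarrow> x \<noteq> zero \<Longrightarrow> x \<noteq> one \<Longrightarrow> a = b"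
proof (rule ccontr)
  assume "a \<in> Lam" "b \<in> Lam" "x \<in> Q a" "x \<in> Q b" "x \<noteq> zero" "x \<noteq> one" "a \<noteq> b"
  then have "x \<in> Q a \<inter> Q b" by blast
  also have "Q a \<inter> Q b = {zero, one}" using Qdisj \<open>a \<in> Lam\<close> \<open>b \<in> Lam\<close> \<open>a \<noteq> b\<close> by blast
  finally show False using \<open>x \<noteq> zero\<close> \<open>x \<noteq> one\<close> by simp
qed

lemma boolean_step:
  assumes a: "a \<in> Lam" and y: "y \<in> Q a" and u: "u \<in> Q a" and nle: "\<not> le y u"
  shows "\<exists>z\<in>Q a. z \<noteq> zero \<and> le z y \<and> le z (c u)"
proof (rule ccontr)
  assume H: "\<not> ?thesis"
  have QaP: "Q a \<subseteq> P" using QP a .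
  have cu: "c u \<in> Q a" using Qc a u .
  have d: "lbs (Q a) le (ubs (Q a) le {u, c u} \<union> {y}) =
        lbs (Q a) le (ubs (Q a) le (lbs (Q a) le {u, y} \<union> lbs (Q a) le {c u, y}))"
    using Qdist[OF a u cu y] .
  have "ubs (Q a) le {u, c u} = {one}" using Quc[OF a u] .
  then have "y \<in> lbs (Q a) le (ubs (Q a) le {u, c u} \<union> {y})"
    unfolding lbs_def using y QaP le_one prefl by auto
  then have yin: "y \<in> lbs (Q a) le (ubs (Q a) le (lbs (Q a) le {u, y} \<union> lbs (Q a) le {c u, y}))"
    using d by simp
  have "u \<in> ubs (Q a) le (lbs (Q a) le {u, y} \<union> lbs (Q a) le {c u, y})"
    unfolding ubs_def
  proof (intro CollectI conjI ballI)
    show "u \<in> Q a" by (rule u)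
    fix m assume m: "m \<in> lbs (Q a) le {u, y} \<union> lbs (Q a) le {c u, y}"
    show "le m u"
    proof (cases "m \<in> lbs (Q a) le {u, y}")
      case True then show ?thesis unfolding lbs_def by blast
    next
      case False
      then have "m \<in> Q a" "le m (c u)" "le m y" using m unfolding lbs_def by auto
      then have "m = zero" using H by blast
      then show ?thesis using zero_le u QaP by blast
    qed
  qed
  then have "le y u" using yin unfolding lbs_def by blast
  then show False using nle by simp
qed

lemma Yfull: "X \<in> D \<Longrightarrow> cm X \<inter> P = {zero} \<Longrightarrow> X = P"
proof -
  assume X: "X \<in> D" and h: "cm X \<inter> P = {zero}"
  have "cm X \<subseteq> P" unfolding cm_def' by (rule L_sub)
  then have "cm X = {zero}" using h by blast
  then have "cm (cm X) = P" using cm_zero by simp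
  then show ?thesis using cm_inv X by simp
qed

lemma two_comp:
  assumes Y: "Y \<in> D" and a: "a \<in> Lam" and b: "b \<in> Lam" and ab: "a \<noteq> b"
    and x: "x \<in> Y" "x \<in> Q b" "x \<noteq> zero" "x \<noteq> one"
    and y: "y \<in> Y" "y \<in> Q a" "y \<noteq> zero" "y \<noteq> one"
  shows "Y = P"
proof -
  have xP: "x \<in> P" and yP: "y \<in> P" using x y D_sub Y by auto
  have "U Y \<subseteq> {one}"
  proof
    fix w assume w: "w \<in> U Y"
    have wP: "w \<in> P" using w U_sub by blast
    have xw: "le x w" and yw: "le y w" using w x y unfolding Umem by auto
    show "w \<in> {one}"
    proof (rule ccontr)
      assume "w \<notin> {one}"
      then have w1: "w \<noteq> one" by simp
      have w0: "w \<noteq> zero"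
      proof
        assume "w = zero"
        then have "le x zero" using xw by simp
        then have "x = zero" using pantisym xP zero zero_le by blast
        then show False using x by simp
      qed
      obtain d where d: "d \<in> Lam" "x \<in> Q d" "w \<in> Q d" using le_comp[OF xP wP xw] by blast
      obtain e where e: "e \<in> Lam" "y \<in> Q e" "w \<in> Q e" using le_comp[OF yP wP yw] by blast
      have "d = b" using uniq_comp[OF d(1) b d(2) x(2) x(3) x(4)] .
      moreover have "e = a" using uniq_comp[OF e(1) a e(2) y(2) y(3) y(4)] .
      ultimately have "w \<in> Q a" "w \<in> Q b" using d e by auto
      then have "a = b" using uniq_comp[OF a b _ _ w0 w1] by blast
      then show False using ab by simp
    qed
  qed
  then have "L {one} \<subseteq> L (U Y)" by (rule L_anti)
  then have "P \<subseteq> Y" using emb1 D_cl Y by simp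
  then show ?thesis using D_sub Y by blast
qed

lemma om_key:
  assumes X: "X \<in> D" and Y: "Y \<in> D" and XY: "X \<subseteq> Y" and h: "cm X \<inter> Y = {zero}"
  shows "X = Y"
proof (rule ccontr)
  assume ne: "X \<noteq> Y"
  then obtain y where y: "y \<in> Y" "y \<notin> X" using XY by blast
  have yP: "y \<in> P" using y D_sub Y by blast
  have XP: "X \<subseteq> P" using D_sub X .
  have full: False if "Y = P"
  proof -
    have "X = P" using Yfull[OF X] h that by simp
    then show False using ne that by simp
  qed
  have y0: "y \<noteq> zero" using y zero_in X by blast
  have y1: "y \<noteq> one"
  proof
    assume "y = one"
    then have "P \<subseteq> Y" using down[OF Y] y(1) le_one by blast
    then show False using full D_sub Y by blast
  qed
  obtain a where a: "a \<in> Lam" "y \<in> Q a" using inQ yP by blast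
  have "y \<notin> L (U X)" using y D_cl X by simp
  then obtain u where u: "u \<in> U X" "\<not> le y u" using yP unfolding Lmem by blast
  have uP: "u \<in> P" using u U_sub by blast
  show False
  proof (cases "u \<in> Q a")
    case True
    obtain z where z: "z \<in> Q a" "z \<noteq> zero" "le z y" "le z (c u)"
      using boolean_step[OF a(1) a(2) True u(2)] by blast
    have zP: "z \<in> P" using z QP a by blast
    have "z \<in> cm X" unfolding cm_def' Lmem
    proof (intro conjI ballI)
      fix m assume "m \<in> c ` X"
      then obtain x where x: "x \<in> X" "m = c x" by blast
      have xP: "x \<in> P" using x XP by blast
      have "le x u" using u x unfolding Umem by blast
      then have "le (c u) (c x)" using anti xP uP by blast
      then show "le z m" using ptrans[OF zP cP[OF uP] cP[OF xP]] z(4) x(2) by simp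
    qed (rule zP)
    moreover have "z \<in> Y" using down[OF Y y(1) zP z(3)] .
    ultimately have "z \<in> {zero}" using h by blast
    then show False using z by simp
  next
    case False
    show False
    proof (cases "X \<subseteq> {zero}")
      case True
      then have "cm {zero} \<subseteq> cm X" by (rule cm_anti)
      then have "P \<subseteq> cm X" using cm_zero by simp
      then have "y \<in> cm X \<inter> Y" using yP y by blast
      then show False using h y0 by blast
    next
      case False
      then obtain x where x: "x \<in> X" "x \<noteq> zero" by blast
      have xP: "x \<in> P" using x XP by blast
      have xu: "le x u" using u x unfolding Umem by blast
      have u1: "u \<noteq> one" using \<open>u \<notin> Q a\<close> Q01 a by blast
      have x1: "x \<noteq> one"
      proof
        assume "x = one"
        then have "u = one" using xu pantisym uP one le_one by blast
        then show False using u1 by simp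
      qed
      obtain b where b: "b \<in> Lam" "x \<in> Q b" "u \<in> Q b" using le_comp[OF xP uP xu] by blast
      have "a \<noteq> b" using b(3) \<open>u \<notin> Q a\<close> by blast
      have "Y = P" using two_comp[OF Y a(1) b(1) \<open>a \<noteq> b\<close> _ b(2) x(2) x1 y(1) a(2) y0 y1] x(1) XY by blast
      then show False using full by blast
    qed
  qed
qed

lemma om_law: "X \<in> D \<Longrightarrow> Y \<in> D \<Longrightarrow> jn X Y = jn (jn X Y \<inter> cm Y) Y"
proof -
  assume X: "X \<in> D" and Y: "Y \<in> D"
  define A where "A = jn X Y"
  have A: "A \<in> D" unfolding A_def using jn_D X Y .
  have cY: "cm Y \<in> D" using cm_in D_sub Y by blast
  have W: "A \<inter> cm Y \<in> D" using mt_D A cY .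
  define B where "B = jn (A \<inter> cm Y) Y"
  have B: "B \<in> D" unfolding B_def using jn_D W Y .
  have YA: "Y \<subseteq> A" unfolding A_def using jn_ub2 X Y .
  have BA: "B \<subseteq> A" unfolding B_def using jn_least[OF A _ YA] by blast
  have "cm B \<subseteq> cm (A \<inter> cm Y)" using cm_anti jn_ub1[OF W Y] unfolding B_def by blast
  moreover have "cm B \<subseteq> cm Y" using cm_anti jn_ub2[OF W Y] unfolding B_def by blast
  ultimately have "cm B \<inter> A \<subseteq> (A \<inter> cm Y) \<inter> cm (A \<inter> cm Y)" by blast
  then have "cm B \<inter> A \<subseteq> {zero}" using meet_compl[OF W] by simp
  moreover have "zero \<in> cm B" "zero \<in> A" using zero_in A cm_in D_sub B by auto
  ultimately have "cm B \<inter> A = {zero}" by blast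
  then have "B = A" using om_key[OF B A BA] by blast
  then show ?thesis unfolding A_def B_def by simp
qed

lemma om_i: "a \<in> D \<Longrightarrow> b \<in> D \<Longrightarrow> b \<subseteq> a \<Longrightarrow> a = jn (a \<inter> cm b) b"
proof -
  assume a: "a \<in> D" and b: "b \<in> D" and ba: "b \<subseteq> a"
  have "jn a b = a" using D_cl a ba by (simp add: Un_absorb2)
  then show ?thesis using om_law[OF a b] by simp
qed

lemma demorgan: "A \<in> D \<Longrightarrow> B \<in> D \<Longrightarrow> cm (jn A B) = cm A \<inter> cm B"
proof -
  assume A: "A \<in> D" and B: "B \<in> D"
  have cA: "cm A \<in> D" and cB: "cm B \<in> D" using cm_in D_sub A B by auto
  have "cm (jn A B) \<subseteq> cm A" using cm_anti jn_ub1[OF A B] by blast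
  moreover have "cm (jn A B) \<subseteq> cm B" using cm_anti jn_ub2[OF A B] by blast
  moreover have "cm A \<inter> cm B \<subseteq> cm (jn A B)"
  proof -
    define w where "w = cm A \<inter> cm B"
    have w: "w \<in> D" unfolding w_def using mt_D cA cB .
    have cw: "cm w \<in> D" using cm_in D_sub w by blast
    have "A \<subseteq> cm w" using cm_anti[of w "cm A"] cm_inv A unfolding w_def by blast
    moreover have "B \<subseteq> cm w" using cm_anti[of w "cm B"] cm_inv B unfolding w_def by blast
    ultimately have "jn A B \<subseteq> cm w" using jn_least cw by blast
    then have "cm (cm w) \<subseteq> cm (jn A B)" by (rule cm_anti)
    then show ?thesis using cm_inv w unfolding w_def by simp
  qed
  ultimately show ?thesis by blast
qed

lemma resid:
  assumes x: "x \<in> D" and y: "y \<in> D" and z: "z \<in> D"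
  shows "jn x (cm y) \<inter> y \<subseteq> z \<longleftrightarrow> x \<subseteq> jn (y \<inter> z) (cm y)"
proof
  have cy: "cm y \<in> D" using cm_in D_sub y by blast
  assume h: "jn x (cm y) \<inter> y \<subseteq> z"
  define a where "a = jn x (cm y)"
  have aD: "a \<in> D" unfolding a_def using jn_D x cy .
  have "cm y \<subseteq> a" unfolding a_def using jn_ub2 x cy .
  then have "a = jn (a \<inter> cm (cm y)) (cm y)" using om_i aD cy by blast
  also have "\<dots> = jn (a \<inter> y) (cm y)" using cm_inv y by simp
  also have "\<dots> \<subseteq> jn (y \<inter> z) (cm y)" using h unfolding a_def by (intro jn_mono) blast
  finally have "a \<subseteq> jn (y \<inter> z) (cm y)" .
  moreover have "x \<subseteq> a" unfolding a_def using jn_ub1 x cy .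
  ultimately show "x \<subseteq> jn (y \<inter> z) (cm y)" by blast
next
  have cy: "cm y \<in> D" using cm_in D_sub y by blast
  assume h: "x \<subseteq> jn (y \<inter> z) (cm y)"
  define w where "w = y \<inter> z"
  have w: "w \<in> D" unfolding w_def using mt_D y z .
  have cw: "cm w \<in> D" using cm_in D_sub w by blast
  define W where "W = jn w (cm y)"
  have WD: "W \<in> D" unfolding W_def using jn_D w cy .
  have "cm y \<subseteq> W" unfolding W_def using jn_ub2 w cy .
  then have "jn x (cm y) \<subseteq> W" using jn_least[OF WD] h unfolding W_def w_def by blast
  then have s1: "jn x (cm y) \<inter> y \<subseteq> W \<inter> y" by blast
  have cwy: "cm w \<inter> y \<in> D" using mt_D cw y .
  have "cm y \<subseteq> cm w" using cm_anti unfolding w_def by blast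
  then have "cm w = jn (cm w \<inter> cm (cm y)) (cm y)" using om_i cw cy by blast
  also have "\<dots> = jn (cm w \<inter> y) (cm y)" using cm_inv y by simp
  finally have "cm (cm w) = cm (jn (cm w \<inter> y) (cm y))" by simp
  then have weq: "w = cm (cm w \<inter> y) \<inter> y" using cm_inv w y demorgan[OF cwy cy] by simp
  have "w \<subseteq> cm (cm w \<inter> y)" using cm_anti[of "cm w \<inter> y" "cm w"] cm_inv w by blast
  moreover have "cm y \<subseteq> cm (cm w \<inter> y)" using cm_anti[of "cm w \<inter> y" y] by blast
  moreover have "cm (cm w \<inter> y) \<in> D" using cm_in D_sub cwy by blast
  ultimately have "W \<subseteq> cm (cm w \<inter> y)" unfolding W_def using jn_least by blast
  then have "W \<inter> y \<subseteq> w" using weq by blast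
  then show "jn x (cm y) \<inter> y \<subseteq> z" using s1 unfolding w_def by blast
qed

lemma cmD: "X \<in> D \<Longrightarrow> cm X \<in> D" using cm_in D_sub by blast

lemma OML: "orthomodular_lattice D (\<subseteq>) cm (dm_embed P le zero) (dm_embed P le one)"
  unfolding orthomodular_lattice_def lattice_with_complementation_def dm_embed_def emb0 emb1
proof (intro conjI ballI impI)
  show "lattice_on D (\<subseteq>)" by (rule lattice_D)
  show "bounded_poset D (\<subseteq>) {zero} P" unfolding bounded_poset_def
    using poset_D zero_D P_in_D zero_in D_sub by blast
  fix X assume X: "X \<in> D"
  show "cm X \<in> D" using cmD X .
  show "cm (cm X) = X" using cm_inv X .
  show "meet_on D (\<subseteq>) X (cm X) = {zero}" using meet_eq[OF X cmD[OF X]] meet_compl[OF X] by simp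
  show "join_on D (\<subseteq>) X (cm X) = P" using join_eq[OF X cmD[OF X]] join_compl[OF X] by simp
  fix Y assume Y: "Y \<in> D"
  { assume "X \<subseteq> Y" then show "cm Y \<subseteq> cm X" by (rule cm_anti) }
  have j: "join_on D (\<subseteq>) X Y = jn X Y" using join_eq X Y .
  have m: "meet_on D (\<subseteq>) (jn X Y) (cm Y) = jn X Y \<inter> cm Y"
    using meet_eq jn_D[OF X Y] cmD[OF Y] .
  have j2: "join_on D (\<subseteq>) (jn X Y \<inter> cm Y) Y = jn (jn X Y \<inter> cm Y) Y"
    using join_eq mt_D[OF jn_D[OF X Y] cmD[OF Y]] Y .
  show "join_on D (\<subseteq>) X Y = join_on D (\<subseteq>) (meet_on D (\<subseteq>) (join_on D (\<subseteq>) X Y) (cm Y)) Y"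
    unfolding j m j2 using om_law X Y .
qed

lemma LR: "left_residuated D (\<subseteq>) (dm_embed P le one)
        (\<lambda>x y. meet_on D (\<subseteq>) (join_on D (\<subseteq>) x (cm y)) y)
        (\<lambda>x y. join_on D (\<subseteq>) (meet_on D (\<subseteq>) x y) (cm x))"
proof -
  have mult: "meet_on D (\<subseteq>) (join_on D (\<subseteq>) x (cm y)) y = jn x (cm y) \<inter> y"
    if "x \<in> D" "y \<in> D" for x y
    using join_eq[OF that(1) cmD[OF that(2)]] meet_eq[OF jn_D[OF that(1) cmD[OF that(2)]] that(2)] by simp
  have imp: "join_on D (\<subseteq>) (meet_on D (\<subseteq>) x y) (cm x) = jn (x \<inter> y) (cm x)"
    if "x \<in> D" "y \<in> D" for x y
    using meet_eq[OF that] join_eq[OF mt_D[OF that] cmD[OF that(1)]] by simp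
  have h1: "lattice_on D (\<subseteq>)" by (rule lattice_D)
  have h2: "P \<in> D" by (rule P_in_D)
  have h3: "\<forall>x\<in>D. x \<subseteq> P" using D_sub by blast
  have h4: "\<forall>x\<in>D. \<forall>y\<in>D. meet_on D (\<subseteq>) (join_on D (\<subseteq>) x (cm y)) y \<in> D \<and>
     join_on D (\<subseteq>) (meet_on D (\<subseteq>) x y) (cm x) \<in> D"
  proof (intro ballI conjI)
    fix x y assume x: "x \<in> D" and y: "y \<in> D"
    show "meet_on D (\<subseteq>) (join_on D (\<subseteq>) x (cm y)) y \<in> D"
      unfolding mult[OF x y] using mt_D jn_D x cmD y by blast
    show "join_on D (\<subseteq>) (meet_on D (\<subseteq>) x y) (cm x) \<in> D"
      unfolding imp[OF x y] using mt_D jn_D x cmD y by blast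
  qed
  have h5: "\<forall>x\<in>D. meet_on D (\<subseteq>) (join_on D (\<subseteq>) x (cm P)) P = x \<and>
      meet_on D (\<subseteq>) (join_on D (\<subseteq>) P (cm x)) x = x"
  proof (intro ballI conjI)
    fix x assume x: "x \<in> D"
    have "jn x (cm P) = x" unfolding cm_P using zero_in[OF x] D_cl[OF x] by (simp add: insert_absorb)
    then show "meet_on D (\<subseteq>) (join_on D (\<subseteq>) x (cm P)) P = x"
      unfolding mult[OF x P_in_D] using D_sub x by blast
    have "jn P (cm x) = P"
      using L_sub ext_LU[of "P \<union> cm x"] L_sub[of "c ` x"] unfolding cm_def' by blast
    then show "meet_on D (\<subseteq>) (join_on D (\<subseteq>) P (cm x)) x = x"
      unfolding mult[OF P_in_D x] using D_sub x by blast
  qed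
  have h6: "\<forall>x\<in>D. \<forall>y\<in>D. \<forall>z\<in>D. (meet_on D (\<subseteq>) (join_on D (\<subseteq>) x (cm y)) y \<subseteq> z) =
            (x \<subseteq> join_on D (\<subseteq>) (meet_on D (\<subseteq>) y z) (cm y))"
  proof (intro ballI)
    fix x y z assume x: "x \<in> D" and y: "y \<in> D" and z: "z \<in> D"
    show "(meet_on D (\<subseteq>) (join_on D (\<subseteq>) x (cm y)) y \<subseteq> z) =
            (x \<subseteq> join_on D (\<subseteq>) (meet_on D (\<subseteq>) y z) (cm y))"
      unfolding mult[OF x y] imp[OF y z] using resid[OF x y z] .
  qed
  show ?thesis unfolding left_residuated_def dm_embed_def emb1
    by (intro conjI h1 h2 h3 h4 h5 h6)
qed

lemma main: "complete_lattice_on D (\<subseteq>)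
    \<and> orthomodular_lattice D (\<subseteq>) cm (dm_embed P le zero) (dm_embed P le one)
    \<and> left_residuated D (\<subseteq>) (dm_embed P le one)
        (\<lambda>x y. meet_on D (\<subseteq>) (join_on D (\<subseteq>) x (cm y)) y)
        (\<lambda>x y. join_on D (\<subseteq>) (meet_on D (\<subseteq>) x y) (cm x))"
  using complete_D OML LR by blast

end

theorem corollary1:
  fixes P :: "'a set" and le :: "'a \<Rightarrow> 'a \<Rightarrow> bool" and c :: "'a \<Rightarrow> 'a"
    and zero one :: 'a and Lam :: "'i set" and Q :: "'i \<Rightarrow> 'a set"
  assumes "bounded_poset P le zero one"
    and "horizontal_sum P le c zero one Lam Q"
  shows "complete_lattice_on (dm P le) (\<subseteq>)
    \<and> orthomodular_lattice (dm P le) (\<subseteq>) (dm_compl P le c)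
        (dm_embed P le zero) (dm_embed P le one)
    \<and> left_residuated (dm P le) (\<subseteq>) (dm_embed P le one)
        (\<lambda>x y. meet_on (dm P le) (\<subseteq>)
                 (join_on (dm P le) (\<subseteq>) x (dm_compl P le c y)) y)
        (\<lambda>x y. join_on (dm P le) (\<subseteq>)
                 (meet_on (dm P le) (\<subseteq>) x y) (dm_compl P le c x))"
proof -
  interpret hs P le c zero one Lam Q using assms by (rule hs.intro)
  show ?thesis by (rule main)
qed

end
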